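(* Let $h_1,h_2,\dots$ be real-valued i.i.d. random variables, let $(h_n^+)_n$ and $(h_n^-)_n$ be independent copies of $(h_n)_n$, and set $h_n^{sym}=h_n^+-h_n^-$. For a sequence $(k_n)$ of i.i.d. random variables (either $(h_n)$ or $(h_n^{sym})$) define, for $\varepsilon>0$, $N\in\mathbb N$: $d_N=\mathbb E(k_1\mathbf 1_{\{|k_1|\le N\}})$, $\pi_N(\varepsilon)=\mathbb P\big(\big|\frac1N\sum_{n=1}^Nk_n-d_N\big|>\varepsilon\big)$, $\tau_N(\varepsilon)=N\,\mathbb P(|k_1|>\varepsilon N)$, $\sigma_N(\varepsilon)=\frac1N\mathbb E(k_1^2\mathbf 1_{\{|k_1|\le\varepsilon N\}})$, $v_N(\varepsilon)=\frac1N\mathrm{Var}(k_1\mathbf 1_{\{|k_1|\le\varepsilon N\}})$; write these as $\pi_N,\tau_N,\sigma_N,v_N$ (with argument $\varepsilon$, and omitted argument meaning $\varepsilon=1$) for $(h_n)$ and as $\pi^{sym}_N,\tau^{sym}_N,\sigma^{sym}_N,v^{sym}_N$ for $(h^{sym}_n)$. Then for all sufficiently large $N\in\mathbb N$: $v_N\le2\,v^{sym}_{2N}=2\,\sigma^{sym}_{2N}$, $\tau_N\le4\,\tau^{sym}_N(1/2)$, and $\pi_N\ge\frac12\pi^{sym}_N(2)$. *)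

theory Defs
  imports "HOL-Probability.Probability"
begin

(* Quantities attached to an i.i.d. real sequence k (indexed from 0: k 0 plays the role of k_1)
   on a probability space M. *)

definition d_trunc :: "'a measure \<Rightarrow> (nat \<Rightarrow> 'a \<Rightarrow> real) \<Rightarrow> nat \<Rightarrow> real" where
  "d_trunc M k N = (\<integral>x. k 0 x * indicator {y. \<bar>k 0 y\<bar> \<le> real N} x \<partial>M)"

definition pi_dev :: "'a measure \<Rightarrow> (nat \<Rightarrow> 'a \<Rightarrow> real) \<Rightarrow> nat \<Rightarrow> real \<Rightarrow> real" where
  "pi_dev M k N \<epsilon> = measure M {x \<in> space M.
      \<bar>(\<Sum>n<N. k n x) / real N - d_trunc M k N\<bar> > \<epsilon>}"

definition tau_tail :: "'a measure \<Rightarrow> (nat \<Rightarrow> 'a \<Rightarrow> real) \<Rightarrow> nat \<Rightarrow> real \<Rightarrow> real" where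
  "tau_tail M k N \<epsilon> = real N * measure M {x \<in> space M. \<bar>k 0 x\<bar> > \<epsilon> * real N}"

definition sigma_trunc :: "'a measure \<Rightarrow> (nat \<Rightarrow> 'a \<Rightarrow> real) \<Rightarrow> nat \<Rightarrow> real \<Rightarrow> real" where
  "sigma_trunc M k N \<epsilon> = (1 / real N) *
      (\<integral>x. (k 0 x)\<^sup>2 * indicator {y. \<bar>k 0 y\<bar> \<le> \<epsilon> * real N} x \<partial>M)"

definition var_rv :: "'a measure \<Rightarrow> ('a \<Rightarrow> real) \<Rightarrow> real" where
  "var_rv M X = (\<integral>x. (X x - (\<integral>y. X y \<partial>M))\<^sup>2 \<partial>M)"

definition v_trunc :: "'a measure \<Rightarrow> (nat \<Rightarrow> 'a \<Rightarrow> real) \<Rightarrow> nat \<Rightarrow> real \<Rightarrow> real" where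
  "v_trunc M k N \<epsilon> = (1 / real N) *
      var_rv M (\<lambda>x. k 0 x * indicator {y. \<bar>k 0 y\<bar> \<le> \<epsilon> * real N} x)"

end

theory Submission imports Defs begin

lemma (in prob_space) indep_sets_reindex:
  assumes "indep_sets F (f ` I)" "inj_on f I"
  shows "indep_sets (\<lambda>i. F (f i)) I"
proof (rule indep_setsI)
  fix i assume "i \<in> I" then show "F (f i) \<subseteq> events"
    using assms(1) unfolding indep_sets_def by auto
next
  fix A J assume J: "J \<noteq> {}" "J \<subseteq> I" "finite J" "\<forall>j\<in>J. A j \<in> F (f j)"
  define A' where "A' = (\<lambda>k. A (the_inv_into J f k))"
  have inj: "inj_on f J" using assms(2) J(2) inj_on_subset by blast
  have A'f: "A' (f j) = A j" if "j \<in> J" for j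
    using the_inv_into_f_f[OF inj that] by (simp add: A'_def)
  have "prob (\<Inter>k\<in>f ` J. A' k) = (\<Prod>k\<in>f ` J. prob (A' k))"
    using J by (intro indep_setsD[OF assms(1)]) (auto simp: A'f)
  moreover have "(\<Inter>k\<in>f ` J. A' k) = (\<Inter>j\<in>J. A j)" using A'f by auto
  moreover have "(\<Prod>k\<in>f ` J. prob (A' k)) = (\<Prod>j\<in>J. prob (A j))"
    using A'f by (simp add: prod.reindex[OF inj])
  ultimately show "prob (\<Inter>j\<in>J. A j) = (\<Prod>j\<in>J. prob (A j))" by simp
qed

lemma (in prob_space) indep_vars_reindex:
  assumes "indep_vars M' X (f ` I)" "inj_on f I"
  shows "indep_vars (\<lambda>i. M' (f i)) (\<lambda>i. X (f i)) I"
  using assms indep_sets_reindex[of "\<lambda>i. {X i -` A \<inter> space M |A. A \<in> sets (M' i)}" f I]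
  unfolding indep_vars_def2 by auto

lemma (in prob_space) indep_var_from_vars:
  assumes "indep_vars (\<lambda>_. borel) Z UNIV" "i \<noteq> j"
  shows "indep_var borel (Z i) borel (Z j)"
proof -
  let ?f = "\<lambda>b. if b then i else j"
  have "inj_on ?f UNIV" using assms(2) by (auto simp: inj_on_def)
  then have "indep_vars (\<lambda>_. borel) (\<lambda>b. Z (?f b)) UNIV"
    using indep_vars_reindex[of "\<lambda>_. borel" Z ?f UNIV] indep_vars_subset[OF assms(1)] by auto
  then show ?thesis unfolding indep_var_def
    by (rule indep_vars_cong[THEN iffD1, rotated -1]) (auto split: bool.split)
qed

lemma sq_ge_of_abs: fixes a b :: real assumes "0 \<le> a" "a \<le> \<bar>b\<bar>" shows "a\<^sup>2 \<le> b\<^sup>2"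
  using assms by (metis power2_abs power_mono)

lemma ind1: "P x \<Longrightarrow> indicator {z. P z} x = (1::real)" by (simp add: indicator_def)
lemma ind0: "\<not> P x \<Longrightarrow> indicator {z. P z} x = (0::real)" by (simp add: indicator_def)

lemma pw_lower:
  fixes u w K c :: real
  assumes K: "0 \<le> K" "K \<le> c"
  shows "(u\<^sup>2 / 4 * indicator {z. 2*K+1 < \<bar>z\<bar> \<and> \<bar>z\<bar> \<le> c} u) * indicator {z. \<bar>z\<bar> \<le> K} w
       + indicator {z. \<bar>z\<bar> \<le> K} u * indicator {z. 2*K+1 < \<bar>z\<bar> \<and> \<bar>z\<bar> \<le> c} w
       \<le> (u - w)\<^sup>2 * (indicator {z. \<bar>z\<bar> \<le> c} u * indicator {z. \<bar>z\<bar> \<le> c} w)"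
proof (cases "2*K+1 < \<bar>u\<bar> \<and> \<bar>u\<bar> \<le> c \<and> \<bar>w\<bar> \<le> K")
  case True
  have "\<bar>u\<bar>/2 \<le> \<bar>u - w\<bar>" using True K by linarith
  then have "(\<bar>u\<bar>/2)\<^sup>2 \<le> (u - w)\<^sup>2" by (intro sq_ge_of_abs) auto
  then have "u\<^sup>2/4 \<le> (u - w)\<^sup>2" by (simp add: power_divide)
  moreover have "\<not> \<bar>u\<bar> \<le> K" "\<bar>w\<bar> \<le> c" using True K by linarith+
  then have "indicator {z. \<bar>z\<bar> \<le> K} u = (0::real)" "indicator {z. \<bar>z\<bar> \<le> K} w = (1::real)"
     "indicator {z. 2*K+1 < \<bar>z\<bar> \<and> \<bar>z\<bar> \<le> c} u = (1::real)"
     "indicator {z. \<bar>z\<bar> \<le> c} u = (1::real)" "indicator {z. \<bar>z\<bar> \<le> c} w = (1::real)"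
    using True by (simp_all add: indicator_def)
  ultimately show ?thesis by simp
next
  case F1: False
  show ?thesis
  proof (cases "\<bar>u\<bar> \<le> K \<and> 2*K+1 < \<bar>w\<bar> \<and> \<bar>w\<bar> \<le> c")
    case True
    have "1 \<le> \<bar>u - w\<bar>" using True K by linarith
    then have "1\<^sup>2 \<le> (u - w)\<^sup>2" by (intro sq_ge_of_abs) auto
    moreover have "\<not> (2*K+1 < \<bar>u\<bar> \<and> \<bar>u\<bar> \<le> c)" "\<bar>u\<bar> \<le> c" using True K by linarith+
    then have "indicator {z. \<bar>z\<bar> \<le> K} u = (1::real)"
     "indicator {z. 2*K+1 < \<bar>z\<bar> \<and> \<bar>z\<bar> \<le> c} w = (1::real)"
     "indicator {z. 2*K+1 < \<bar>z\<bar> \<and> \<bar>z\<bar> \<le> c} u = (0::real)"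
     "indicator {z. \<bar>z\<bar> \<le> c} u = (1::real)" "indicator {z. \<bar>z\<bar> \<le> c} w = (1::real)"
      using True by (simp_all add: indicator_def)
    ultimately show ?thesis by simp
  next
    case False
    then have "(u\<^sup>2 / 4 * indicator {z. 2*K+1 < \<bar>z\<bar> \<and> \<bar>z\<bar> \<le> c} u) * indicator {z. \<bar>z\<bar> \<le> K} w
       + indicator {z. \<bar>z\<bar> \<le> K} u * indicator {z. 2*K+1 < \<bar>z\<bar> \<and> \<bar>z\<bar> \<le> c} w = 0"
      using F1 unfolding indicator_def by auto
    then show ?thesis by simp
  qed
qed

lemma pw_upper:
  fixes u w c :: real
  shows "(u - w)\<^sup>2 * (indicator {z. \<bar>z\<bar> \<le> c} u * indicator {z. \<bar>z\<bar> \<le> c} w)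
     \<le> (u - w)\<^sup>2 * indicator {z. \<bar>z\<bar> \<le> 2 * c} (u - w)"
proof (cases "\<bar>u\<bar> \<le> c \<and> \<bar>w\<bar> \<le> c")
  case True
  then have "\<bar>u - w\<bar> \<le> 2 * c" by linarith
  then have "indicator {z. \<bar>z\<bar> \<le> 2 * c} (u - w) = (1::real)" "indicator {z. \<bar>z\<bar> \<le> c} u = (1::real)" "indicator {z. \<bar>z\<bar> \<le> c} w = (1::real)"
    using True by (simp_all add: indicator_def)
  then show ?thesis by simp
next
  case False
  then have "indicator {z. \<bar>z\<bar> \<le> c} u * indicator {z. \<bar>z\<bar> \<le> c} w = (0::real)"
    unfolding indicator_def by auto
  then show ?thesis by (simp only: mult_zero_right) simp
qed

lemma pw_S:
  fixes y K c :: real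
  shows "y\<^sup>2 * indicator {z. \<bar>z\<bar> \<le> c} y \<le> (2*K+1)\<^sup>2 + y\<^sup>2 * indicator {z. 2*K+1 < \<bar>z\<bar> \<and> \<bar>z\<bar> \<le> c} y"
proof (cases "\<bar>y\<bar> \<le> 2*K+1")
  case True
  then have "y\<^sup>2 \<le> (2*K+1)\<^sup>2" using power_mono[OF True abs_ge_zero, of 2] by simp
  moreover have "0 \<le> y\<^sup>2 * indicator {z. 2*K+1 < \<bar>z\<bar> \<and> \<bar>z\<bar> \<le> c} y" by simp
  moreover have "y\<^sup>2 * indicator {z. \<bar>z\<bar> \<le> c} y \<le> y\<^sup>2" by (simp add: indicator_def)
  ultimately show ?thesis by linarith
next
  case False
  then have "y\<^sup>2 * indicator {z. \<bar>z\<bar> \<le> c} y \<le> y\<^sup>2 * indicator {z. 2*K+1 < \<bar>z\<bar> \<and> \<bar>z\<bar> \<le> c} y"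
    by (simp add: indicator_def)
  moreover have "0 \<le> (2*K+1)\<^sup>2" by simp
  ultimately show ?thesis by linarith
qed

locale L8 = prob_space +
  fixes h hp hm :: "nat \<Rightarrow> 'a \<Rightarrow> real"
  assumes indh: "indep_vars (\<lambda>_. borel) h UNIV"
    and dh: "\<And>n. distr M borel (h n) = distr M borel (h 0)"
    and indpm: "indep_vars (\<lambda>_. borel)
           (\<lambda>(b, n). if b then hp n else hm n) (UNIV :: (bool \<times> nat) set)"
    and dp: "\<And>n. distr M borel (hp n) = distr M borel (h 0)"
    and dm: "\<And>n. distr M borel (hm n) = distr M borel (h 0)"
begin

abbreviation "Z \<equiv> (\<lambda>(b, n). if b then hp n else hm n)"

lemma meas_h[measurable]: "h n \<in> borel_measurable M"
  using indh unfolding indep_vars_def by auto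

lemma meas_Z: "Z i \<in> borel_measurable M"
  using indpm unfolding indep_vars_def by (cases i) auto

lemma meas_hp[measurable]: "hp n \<in> borel_measurable M"
  using meas_Z[of "(True, n)"] by simp

lemma meas_hm[measurable]: "hm n \<in> borel_measurable M"
  using meas_Z[of "(False, n)"] by simp

lemma ind_hp: "indep_vars (\<lambda>_. borel) hp UNIV"
proof -
  have "indep_vars (\<lambda>_. borel) Z (range (\<lambda>n. (True, n)))"
    using indpm indep_vars_subset by blast
  from indep_vars_reindex[OF this] show ?thesis by (auto simp: inj_on_def)
qed

lemma ind_hm: "indep_vars (\<lambda>_. borel) hm UNIV"
proof -
  have "indep_vars (\<lambda>_. borel) Z (range (\<lambda>n. (False, n)))"
    using indpm indep_vars_subset by blast
  from indep_vars_reindex[OF this] show ?thesis by (auto simp: inj_on_def)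
qed

lemma ind_pm: "indep_var borel (hp 0) borel (hm 0)"
  using indep_var_from_vars[OF indpm, of "(True,0)" "(False,0)"] by simp

lemma ind_mp: "indep_var borel (hm 0) borel (hp 0)"
  using indep_var_from_vars[OF indpm, of "(False,0)" "(True,0)"] by simp

lemma transfer_int:
  fixes g :: "real \<Rightarrow> real"
  assumes X: "X \<in> borel_measurable M" "distr M borel X = distr M borel (h 0)"
    and g: "g \<in> borel_measurable borel"
  shows "(\<integral>x. g (X x) \<partial>M) = (\<integral>x. g (h 0 x) \<partial>M)"
proof -
  have "(\<integral>x. g (X x) \<partial>M) = integral\<^sup>L (distr M borel X) g"
    by (simp only: integral_distr[OF X(1) g])
  also have "\<dots> = integral\<^sup>L (distr M borel (h 0)) g" using X by simp
  also have "\<dots> = (\<integral>x. g (h 0 x) \<partial>M)" using g by (intro integral_distr) auto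
  finally show ?thesis .
qed

lemma transfer_prob:
  assumes X: "X \<in> borel_measurable M" "distr M borel X = distr M borel (h 0)"
    and B: "B \<in> sets borel"
  shows "prob {x\<in>space M. X x \<in> B} = prob {x\<in>space M. h 0 x \<in> B}"
proof -
  have "prob {x\<in>space M. X x \<in> B} = measure (distr M borel X) B"
    using X B by (subst measure_distr) (auto intro!: arg_cong[where f=prob])
  also have "\<dots> = measure (distr M borel (h 0)) B" using X by simp
  also have "\<dots> = prob {x\<in>space M. h 0 x \<in> B}"
    using B by (subst measure_distr) (auto intro!: arg_cong[where f=prob])
  finally show ?thesis .
qed

lemma sum_distr_gen:
  assumes X: "indep_vars (\<lambda>_. borel) X UNIV" "\<And>n. distr M borel (X n) = distr M borel (h 0)"
    and N: "N > 0"
  shows "distr M borel (\<lambda>x. \<Sum>n<N. X n x) = distr (\<Pi>\<^sub>M i\<in>{..<N}. distr M borel (h 0)) borel (\<lambda>f. \<Sum>i<N. f i)"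
proof -
  have rv: "\<And>i. random_variable borel (X i)" using X(1) unfolding indep_vars_def by auto
  have iv: "indep_vars (\<lambda>_. borel) X {..<N}" using X(1) indep_vars_subset by blast
  have meas1: "(\<lambda>x. \<lambda>i\<in>{..<N}. X i x) \<in> measurable M (\<Pi>\<^sub>M i\<in>{..<N}. borel)"
    using rv by (intro measurable_restrict) auto
  have meas2: "(\<lambda>f. \<Sum>i<N. f i) \<in> borel_measurable (\<Pi>\<^sub>M i\<in>{..<N}. (borel :: real measure))"
    by measurable
  have "distr M borel (\<lambda>x. \<Sum>n<N. X n x) = distr (distr M (\<Pi>\<^sub>M i\<in>{..<N}. borel) (\<lambda>x. \<lambda>i\<in>{..<N}. X i x)) borel (\<lambda>f. \<Sum>i<N. f i)"
    by (subst distr_distr[OF meas2 meas1]) (auto intro!: distr_cong simp: comp_def)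
  also have "distr M (\<Pi>\<^sub>M i\<in>{..<N}. borel) (\<lambda>x. \<lambda>i\<in>{..<N}. X i x) = (\<Pi>\<^sub>M i\<in>{..<N}. distr M borel (X i))"
    using indep_vars_iff_distr_eq_PiM[where I="{..<N}" and X=X and M'="\<lambda>_. borel", OF _ rv] iv N
    by (metis lessThan_iff empty_iff)
  also have "\<dots> = (\<Pi>\<^sub>M i\<in>{..<N}. distr M borel (h 0))"
    using X(2) by (intro PiM_cong) auto
  finally show ?thesis .
qed

lemma sum_distr:
  assumes N: "N > 0"
  shows "distr M borel (\<lambda>x. \<Sum>n<N. hp n x) = distr M borel (\<lambda>x. \<Sum>n<N. h n x)"
    "distr M borel (\<lambda>x. \<Sum>n<N. hm n x) = distr M borel (\<lambda>x. \<Sum>n<N. h n x)"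
  using sum_distr_gen[OF ind_hp dp N] sum_distr_gen[OF ind_hm dm N] sum_distr_gen[OF indh dh N]
  by simp_all

lemma swap_int:
  fixes g :: "real \<Rightarrow> real \<Rightarrow> real"
  assumes g: "(\<lambda>(p, q). g p q) \<in> borel_measurable (borel \<Otimes>\<^sub>M borel)"
  shows "(\<integral>x. g (hp 0 x) (hm 0 x) \<partial>M) = (\<integral>x. g (hm 0 x) (hp 0 x) \<partial>M)"
proof -
  have e1: "distr M (borel \<Otimes>\<^sub>M borel) (\<lambda>x. (hp 0 x, hm 0 x)) = distr M borel (h 0) \<Otimes>\<^sub>M distr M borel (h 0)"
    using ind_pm[unfolded indep_var_distribution_eq] dp dm by simp
  have e2: "distr M (borel \<Otimes>\<^sub>M borel) (\<lambda>x. (hm 0 x, hp 0 x)) = distr M borel (h 0) \<Otimes>\<^sub>M distr M borel (h 0)"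
    using ind_mp[unfolded indep_var_distribution_eq] dp dm by simp
  have "(\<integral>x. g (hp 0 x) (hm 0 x) \<partial>M) = integral\<^sup>L (distr M (borel \<Otimes>\<^sub>M borel) (\<lambda>x. (hp 0 x, hm 0 x))) (\<lambda>(p, q). g p q)"
    by (subst integral_distr) (use g in auto)
  also have "\<dots> = integral\<^sup>L (distr M (borel \<Otimes>\<^sub>M borel) (\<lambda>x. (hm 0 x, hp 0 x))) (\<lambda>(p, q). g p q)"
    using e1 e2 by simp
  also have "\<dots> = (\<integral>x. g (hm 0 x) (hp 0 x) \<partial>M)"
    by (subst integral_distr) (use g in auto)
  finally show ?thesis .
qed

lemma sym0:
  "(\<integral>x. (hp 0 x - hm 0 x) * indicator {y. \<bar>hp 0 y - hm 0 y\<bar> \<le> c} x \<partial>M) = 0"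
proof -
  define g :: "real \<Rightarrow> real \<Rightarrow> real" where "g p q = (p - q) * indicator {z. \<bar>z\<bar> \<le> c} (p - q)" for p q
  have gm: "(\<lambda>(p, q). g p q) \<in> borel_measurable (borel \<Otimes>\<^sub>M borel)"
  proof -
    have "(\<lambda>z::real. z * indicator {z. \<bar>z\<bar> \<le> c} z) \<in> borel_measurable borel"
      by (intro borel_measurable_times borel_measurable_indicator) auto
    moreover have "(\<lambda>(p, q). p - q :: real) \<in> borel_measurable (borel \<Otimes>\<^sub>M borel)" by measurable
    ultimately have "(\<lambda>z::real. z * indicator {z. \<bar>z\<bar> \<le> c} z) \<circ> (\<lambda>(p, q). p - q) \<in> borel_measurable (borel \<Otimes>\<^sub>M borel)"
      by (rule measurable_comp[rotated])
    then show ?thesis by (simp add: g_def comp_def case_prod_beta')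
  qed
  have eq: "\<And>x. (hp 0 x - hm 0 x) * indicator {y. \<bar>hp 0 y - hm 0 y\<bar> \<le> c} x = g (hp 0 x) (hm 0 x)"
    by (simp add: g_def indicator_def)
  have gs: "g q p = - g p q" for p q by (simp add: g_def indicator_def abs_minus_commute)
  have "(\<integral>x. g (hp 0 x) (hm 0 x) \<partial>M) = (\<integral>x. g (hm 0 x) (hp 0 x) \<partial>M)" by (rule swap_int[OF gm])
  also have "\<dots> = (\<integral>x. - g (hp 0 x) (hm 0 x) \<partial>M)" by (rule Bochner_Integration.integral_cong[OF refl], rule gs)
  also have "\<dots> = - (\<integral>x. g (hp 0 x) (hm 0 x) \<partial>M)" by (rule integral_minus)
  finally show ?thesis unfolding eq by simp
qed

definition tailp :: "real \<Rightarrow> real" where "tailp r = prob {x\<in>space M. r < \<bar>h 0 x\<bar>}"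

lemma tl_mono: "r \<le> s \<Longrightarrow> tailp s \<le> tailp r"
  unfolding tailp_def by (intro finite_measure_mono) auto

lemma tl_lim: "(\<lambda>n. tailp (real n)) \<longlonglongrightarrow> 0"
proof -
  have "(\<lambda>n. prob {x\<in>space M. real n < \<bar>h 0 x\<bar>}) \<longlonglongrightarrow> prob (\<Inter>n. {x\<in>space M. real n < \<bar>h 0 x\<bar>})"
    by (intro finite_Lim_measure_decseq) (auto simp: decseq_def)
  moreover have "(\<Inter>n. {x\<in>space M. real n < \<bar>h 0 x\<bar>}) = {}"
  proof safe
    fix x assume "x \<in> (\<Inter>n. {x\<in>space M. real n < \<bar>h 0 x\<bar>})"
    then have "real (nat \<lceil>\<bar>h 0 x\<bar>\<rceil>) < \<bar>h 0 x\<bar>" by blast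
    then show "x \<in> {}" by linarith
  qed
  ultimately show ?thesis by (simp add: tailp_def)
qed

lemma tl_ev: "e > 0 \<Longrightarrow> \<exists>n0. \<forall>r\<ge>real n0. tailp r \<le> e"
proof -
  assume e: "e > 0"
  from tl_lim e obtain n0 where "\<forall>n\<ge>n0. \<bar>tailp (real n)\<bar> < e"
    unfolding LIMSEQ_def dist_real_def by auto
  then have "tailp (real n0) \<le> e" by auto
  then show ?thesis using tl_mono by (meson order.trans)
qed

lemma tau_part:
  "\<forall>\<^sub>F N in sequentially. tailp (real N) \<le> 4 * prob {x\<in>space M. 1/2 * real N < \<bar>hp 0 x - hm 0 x\<bar>}"
proof -
  obtain n0 where n0: "\<forall>r\<ge>real n0. tailp r \<le> 1/2" using tl_ev[of "1/2"] by auto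
  show ?thesis unfolding eventually_sequentially
  proof (intro exI allI impI)
    fix N :: nat assume N: "N \<ge> 2 * n0"
    let ?A = "{p::real. real N < \<bar>p\<bar>}" and ?B = "{q::real. \<bar>q\<bar> \<le> 1/2 * real N}"
    have "prob ((\<lambda>x. (hp 0 x, hm 0 x)) -` (?A \<times> ?B) \<inter> space M) = prob (hp 0 -` ?A \<inter> space M) * prob (hm 0 -` ?B \<inter> space M)"
      by (rule indep_varD[OF ind_pm]) auto
    also have "prob (hp 0 -` ?A \<inter> space M) = tailp (real N)"
      using transfer_prob[OF meas_hp dp, of ?A] unfolding tailp_def by (simp add: vimage_def Int_def conj_commute)
    also have "prob (hm 0 -` ?B \<inter> space M) = 1 - tailp (1/2 * real N)"
    proof -
      have "prob (hm 0 -` ?B \<inter> space M) = prob {x\<in>space M. h 0 x \<in> ?B}"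
        using transfer_prob[OF meas_hm dm, of ?B] by (simp add: vimage_def Int_def conj_commute)
      also have "{x\<in>space M. h 0 x \<in> ?B} = space M - {x\<in>space M. 1/2 * real N < \<bar>h 0 x\<bar>}" by auto
      also have "prob \<dots> = 1 - tailp (1/2 * real N)" unfolding tailp_def
        by (subst prob_compl) auto
      finally show ?thesis .
    qed
    finally have eq: "prob ((\<lambda>x. (hp 0 x, hm 0 x)) -` (?A \<times> ?B) \<inter> space M) = tailp (real N) * (1 - tailp (1/2 * real N))" .
    have "tailp (1/2 * real N) \<le> 1/2" using n0 N by auto
    moreover have "tailp (real N) \<ge> 0" unfolding tailp_def by simp
    ultimately have "tailp (real N) * (1/2) \<le> tailp (real N) * (1 - tailp (1/2 * real N))"
      by (intro mult_left_mono) auto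
    then have "tailp (real N) \<le> 2 * (tailp (real N) * (1 - tailp (1/2 * real N)))" by linarith
    also have "tailp (real N) * (1 - tailp (1/2 * real N)) \<le> prob {x\<in>space M. 1/2 * real N < \<bar>hp 0 x - hm 0 x\<bar>}"
      unfolding eq[symmetric] 
    proof (intro finite_measure_mono)
      show "(\<lambda>x. (hp 0 x, hm 0 x)) -` (?A \<times> ?B) \<inter> space M \<subseteq> {x \<in> space M. 1 / 2 * real N < \<bar>hp 0 x - hm 0 x\<bar>}"
      proof (intro subsetI)
        fix x assume "x \<in> (\<lambda>x. (hp 0 x, hm 0 x)) -` (?A \<times> ?B) \<inter> space M"
        then have xs: "x \<in> space M" and "(hp 0 x, hm 0 x) \<in> ?A \<times> ?B" by auto
        then have "real N < \<bar>hp 0 x\<bar>" "\<bar>hm 0 x\<bar> \<le> 1/2 * real N" by auto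
        moreover have "\<bar>hp 0 x\<bar> \<le> \<bar>hp 0 x - hm 0 x\<bar> + \<bar>hm 0 x\<bar>" using abs_triangle_ineq[of "hp 0 x - hm 0 x" "hm 0 x"] by simp
        ultimately have "1 / 2 * real N < \<bar>hp 0 x - hm 0 x\<bar>" by linarith
        then show "x \<in> {x \<in> space M. 1 / 2 * real N < \<bar>hp 0 x - hm 0 x\<bar>}" using xs by simp
      qed
    qed auto
    finally show "tailp (real N) \<le> 4 * prob {x\<in>space M. 1/2 * real N < \<bar>hp 0 x - hm 0 x\<bar>}"
      using measure_nonneg[of M "{x\<in>space M. 1/2 * real N < \<bar>hp 0 x - hm 0 x\<bar>}"] by linarith
  qed
qed

lemma prob_eq_distr:
  assumes X: "X \<in> borel_measurable M" "Y \<in> borel_measurable M" "distr M borel X = distr M borel Y"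
    and B: "B \<in> sets borel"
  shows "prob {x\<in>space M. X x \<in> B} = prob {x\<in>space M. Y x \<in> B}"
proof -
  have "prob {x\<in>space M. X x \<in> B} = measure (distr M borel X) B"
    using X B by (subst measure_distr) (auto intro!: arg_cong[where f=prob])
  also have "\<dots> = measure (distr M borel Y) B" using X by simp
  also have "\<dots> = prob {x\<in>space M. Y x \<in> B}"
    using X B by (subst measure_distr) (auto intro!: arg_cong[where f=prob])
  finally show ?thesis .
qed

lemma pi_part:
  assumes N: "N > 0"
  shows "prob {x\<in>space M. 2 < \<bar>(\<Sum>n<N. hp n x - hm n x) / real N - 0\<bar>}
     \<le> 2 * prob {x\<in>space M. 1 < \<bar>(\<Sum>n<N. h n x) / real N - d\<bar>}"
proof -
  let ?B = "{s::real. 1 < \<bar>s / real N - d\<bar>}"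
  have Bs: "?B \<in> sets borel" by measurable
  have U: "prob {x\<in>space M. (\<Sum>n<N. hp n x) \<in> ?B} = prob {x\<in>space M. (\<Sum>n<N. h n x) \<in> ?B}"
    by (rule prob_eq_distr[OF _ _ sum_distr(1)[OF N] Bs]) auto
  have V: "prob {x\<in>space M. (\<Sum>n<N. hm n x) \<in> ?B} = prob {x\<in>space M. (\<Sum>n<N. h n x) \<in> ?B}"
    by (rule prob_eq_distr[OF _ _ sum_distr(2)[OF N] Bs]) auto
  have Us: "{x\<in>space M. (\<Sum>n<N. hp n x) \<in> ?B} \<in> events"
    using measurable_sets[OF _ Bs, of "\<lambda>x. \<Sum>n<N. hp n x" M] by (simp add: vimage_def Int_def conj_commute)
  have Vs: "{x\<in>space M. (\<Sum>n<N. hm n x) \<in> ?B} \<in> events"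
    using measurable_sets[OF _ Bs, of "\<lambda>x. \<Sum>n<N. hm n x" M] by (simp add: vimage_def Int_def conj_commute)
  have sub: "{x\<in>space M. 2 < \<bar>(\<Sum>n<N. hp n x - hm n x) / real N - 0\<bar>}
     \<subseteq> {x\<in>space M. (\<Sum>n<N. hp n x) \<in> ?B} \<union> {x\<in>space M. (\<Sum>n<N. hm n x) \<in> ?B}"
  proof (intro subsetI)
    fix x assume "x \<in> {x\<in>space M. 2 < \<bar>(\<Sum>n<N. hp n x - hm n x) / real N - 0\<bar>}"
    then have xs: "x \<in> space M" and lt: "2 < \<bar>(\<Sum>n<N. hp n x - hm n x) / real N\<bar>" by auto
    have "(\<Sum>n<N. hp n x - hm n x) / real N = ((\<Sum>n<N. hp n x) / real N - d) - ((\<Sum>n<N. hm n x) / real N - d)"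
      by (simp add: sum_subtractf diff_divide_distrib)
    with lt have "1 < \<bar>(\<Sum>n<N. hp n x) / real N - d\<bar> \<or> 1 < \<bar>(\<Sum>n<N. hm n x) / real N - d\<bar>"
      by linarith
    then show "x \<in> {x\<in>space M. (\<Sum>n<N. hp n x) \<in> ?B} \<union> {x\<in>space M. (\<Sum>n<N. hm n x) \<in> ?B}"
      using xs by auto
  qed
  have "prob {x\<in>space M. 2 < \<bar>(\<Sum>n<N. hp n x - hm n x) / real N - 0\<bar>}
     \<le> prob ({x\<in>space M. (\<Sum>n<N. hp n x) \<in> ?B} \<union> {x\<in>space M. (\<Sum>n<N. hm n x) \<in> ?B})"
    using Us Vs by (intro finite_measure_mono[OF sub]) auto
  also have "\<dots> \<le> prob {x\<in>space M. (\<Sum>n<N. hp n x) \<in> ?B} + prob {x\<in>space M. (\<Sum>n<N. hm n x) \<in> ?B}"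
    using Us Vs by (intro measure_subadditive) (auto simp: emeasure_eq_measure)
  also have "\<dots> = 2 * prob {x\<in>space M. 1 < \<bar>(\<Sum>n<N. h n x) / real N - d\<bar>}"
    unfolding U V by simp
  finally show ?thesis .
qed

lemma bint:
  fixes f :: "'a \<Rightarrow> real"
  assumes "f \<in> borel_measurable M" "\<And>x. x \<in> space M \<Longrightarrow> \<bar>f x\<bar> \<le> B"
  shows "integrable M f"
  using assms by (intro integrable_const_bound[where B=B]) auto

lemma indep_prod:
  fixes f g :: "real \<Rightarrow> real"
  assumes f: "f \<in> borel_measurable borel" and g: "g \<in> borel_measurable borel"
    and fb: "\<And>y. \<bar>f y\<bar> \<le> Bf" and gb: "\<And>y. \<bar>g y\<bar> \<le> Bg"
  shows "(\<integral>x. f (hp 0 x) * g (hm 0 x) \<partial>M) = (\<integral>x. f (h 0 x) \<partial>M) * (\<integral>x. g (h 0 x) \<partial>M)"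
proof -
  have iv: "indep_var borel (f \<circ> hp 0) borel (g \<circ> hm 0)"
    by (rule indep_var_compose[OF ind_pm f g])
  have i1: "integrable M (f \<circ> hp 0)" using f fb by (intro bint) auto
  have i2: "integrable M (g \<circ> hm 0)" using g gb by (intro bint) auto
  have "(\<integral>x. f (hp 0 x) * g (hm 0 x) \<partial>M) = (\<integral>x. (f \<circ> hp 0) x * (g \<circ> hm 0) x \<partial>M)" by simp
  also have "\<dots> = (\<integral>x. (f \<circ> hp 0) x \<partial>M) * (\<integral>x. (g \<circ> hm 0) x \<partial>M)"
    by (rule indep_var_lebesgue_integral[OF iv i1 i2])
  also have "\<dots> = (\<integral>x. f (h 0 x) \<partial>M) * (\<integral>x. g (h 0 x) \<partial>M)"
    using transfer_int[OF meas_hp dp f] transfer_int[OF meas_hm dm g] by simp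
  finally show ?thesis .
qed

lemma var_sym:
  "var_rv M (\<lambda>x. (hp 0 x - hm 0 x) * indicator {y. \<bar>hp 0 y - hm 0 y\<bar> \<le> c} x)
   = (\<integral>x. (hp 0 x - hm 0 x)\<^sup>2 * indicator {y. \<bar>hp 0 y - hm 0 y\<bar> \<le> c} x \<partial>M)"
  unfolding var_rv_def sym0 by (intro Bochner_Integration.integral_cong) (auto simp: power_mult_distrib indicator_def)

lemma int_ind:
  assumes "X \<in> borel_measurable M" "B \<in> sets borel"
  shows "(\<integral>x. indicator B (X x) \<partial>M) = prob {x\<in>space M. X x \<in> B}"
proof -
  have "(\<integral>x. indicator B (X x) \<partial>M) = (\<integral>x. indicator {x\<in>space M. X x \<in> B} x \<partial>M)"
    by (rule Bochner_Integration.integral_cong) (auto simp: indicator_def)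
  also have "\<dots> = prob {x\<in>space M. X x \<in> B}" by (simp add: Int_absorb2 subset_eq)
  finally show ?thesis .
qed

lemma core:
  assumes K: "0 \<le> K" "K \<le> c"
    and hB: "1/2 \<le> prob {x\<in>space M. \<bar>h 0 x\<bar> \<le> K}"
    and t1: "tailp c \<le> 1/16"
    and t2: "tailp c * (2*K+1)\<^sup>2 \<le> prob {x\<in>space M. 2*K+1 < \<bar>h 0 x\<bar> \<and> \<bar>h 0 x\<bar> \<le> c} / 4"
  shows "var_rv M (\<lambda>x. h 0 x * indicator {y. \<bar>h 0 y\<bar> \<le> c} x)
     \<le> (\<integral>x. (hp 0 x - hm 0 x)\<^sup>2 * indicator {y. \<bar>hp 0 y - hm 0 y\<bar> \<le> 2*c} x \<partial>M)"
proof -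
  define fA :: "real \<Rightarrow> real" where "fA y = indicator {z. \<bar>z\<bar> \<le> c} y" for y
  define iB :: "real \<Rightarrow> real" where "iB y = indicator {z. \<bar>z\<bar> \<le> K} y" for y
  define iE :: "real \<Rightarrow> real" where "iE y = indicator {z. 2*K+1 < \<bar>z\<bar> \<and> \<bar>z\<bar> \<le> c} y" for y
  define q1 :: "real \<Rightarrow> real" where "q1 y = y * fA y" for y
  define q2 :: "real \<Rightarrow> real" where "q2 y = y\<^sup>2 * fA y" for y
  define qE :: "real \<Rightarrow> real" where "qE y = y\<^sup>2 / 4 * iE y" for y
  have c0: "0 \<le> c" using K by simp
  have mfA[measurable]: "fA \<in> borel_measurable borel" unfolding fA_def
    by (intro borel_measurable_indicator) auto
  have miB[measurable]: "iB \<in> borel_measurable borel" unfolding iB_def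
    by (intro borel_measurable_indicator) auto
  have miE[measurable]: "iE \<in> borel_measurable borel" unfolding iE_def
    by (intro borel_measurable_indicator) auto
  have mq1[measurable]: "q1 \<in> borel_measurable borel" unfolding q1_def by measurable
  have mq2[measurable]: "q2 \<in> borel_measurable borel" unfolding q2_def by measurable
  have mqE[measurable]: "qE \<in> borel_measurable borel" unfolding qE_def by measurable
  have bfA: "\<bar>fA y\<bar> \<le> 1" for y by (simp add: fA_def indicator_def)
  have biB: "\<bar>iB y\<bar> \<le> 1" for y by (simp add: iB_def indicator_def)
  have biE: "\<bar>iE y\<bar> \<le> 1" for y by (simp add: iE_def indicator_def)
  have bq1: "\<bar>q1 y\<bar> \<le> c" for y by (simp add: q1_def fA_def indicator_def c0 abs_mult)
  have bq2: "\<bar>q2 y\<bar> \<le> c\<^sup>2" for y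
  proof (cases "\<bar>y\<bar> \<le> c")
    case True
    then have "y\<^sup>2 \<le> c\<^sup>2" using power_mono[OF True abs_ge_zero, of 2] by simp
    then show ?thesis using True by (simp add: q2_def fA_def indicator_def)
  qed (simp add: q2_def fA_def indicator_def)
  have bqE: "\<bar>qE y\<bar> \<le> c\<^sup>2" for y
  proof (cases "2*K+1 < \<bar>y\<bar> \<and> \<bar>y\<bar> \<le> c")
    case True
    then have "\<bar>y\<bar> \<le> c" by simp
    then have "y\<^sup>2 \<le> c\<^sup>2" using power_mono[OF _ abs_ge_zero, of "\<bar>y\<bar>" c 2] by simp
    then show ?thesis using True by (simp add: qE_def iE_def indicator_def) (use zero_le_power2[of c] in linarith)
  next
    case False
    then have "iE y = 0" unfolding iE_def indicator_def by auto
    then show ?thesis by (simp add: qE_def)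
  qed
  let ?u = "hp 0" and ?w = "hm 0" and ?h = "h 0"
  define S where "S = (\<integral>x. q2 (h 0 x) \<partial>M)"
  define m where "m = (\<integral>x. q1 (h 0 x) \<partial>M)"
  define a where "a = (\<integral>x. fA (h 0 x) \<partial>M)"
  define pB where "pB = (\<integral>x. iB (h 0 x) \<partial>M)"
  define pE where "pE = (\<integral>x. iE (h 0 x) \<partial>M)"
  define SE4 where "SE4 = (\<integral>x. qE (h 0 x) \<partial>M)"
  define t where "t = tailp c"
  have int_h: "integrable M (\<lambda>x. g (h 0 x))" if "g \<in> borel_measurable borel" "\<And>y. \<bar>g y\<bar> \<le> B" for g :: "real \<Rightarrow> real" and B
    using that by (intro bint[where B=B]) auto
  have int_uw: "integrable M (\<lambda>x. f (hp 0 x) * g (hm 0 x))"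
    if "f \<in> borel_measurable borel" "\<And>y. \<bar>f y\<bar> \<le> B1" "g \<in> borel_measurable borel" "\<And>y. \<bar>g y\<bar> \<le> B2"
    for f g :: "real \<Rightarrow> real" and B1 B2
  proof (rule bint[where B="B1 * B2"])
    show "(\<lambda>x. f (hp 0 x) * g (hm 0 x)) \<in> borel_measurable M" using that by measurable
    fix x show "\<bar>f (hp 0 x) * g (hm 0 x)\<bar> \<le> B1 * B2"
      unfolding abs_mult using that(2)[of "hp 0 x"] that(4)[of "hm 0 x"]
      by (intro mult_mono) (auto intro: order.trans[OF abs_ge_zero])
  qed
  have var_eq: "var_rv M (\<lambda>x. h 0 x * indicator {y. \<bar>h 0 y\<bar> \<le> c} x) = S - m\<^sup>2"
  proof -
    have X: "(\<lambda>x. h 0 x * indicator {y. \<bar>h 0 y\<bar> \<le> c} x) = (\<lambda>x. q1 (h 0 x))"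
      by (auto simp: q1_def fA_def indicator_def)
    have pt: "(q1 y - m)\<^sup>2 = q2 y - 2 * m * q1 y + m\<^sup>2" for y
      by (simp add: q1_def q2_def fA_def indicator_def power2_eq_square algebra_simps)
    have i1: "integrable M (\<lambda>x. q1 (h 0 x))" using int_h[OF mq1 bq1] .
    have i2: "integrable M (\<lambda>x. q2 (h 0 x))" using int_h[OF mq2 bq2] .
    have "var_rv M (\<lambda>x. q1 (h 0 x)) = (\<integral>x. q2 (h 0 x) - 2 * m * q1 (h 0 x) + m\<^sup>2 \<partial>M)"
      unfolding var_rv_def m_def[symmetric] pt ..
    also have "\<dots> = S - 2 * m * m + m\<^sup>2"
      using i1 i2 by (simp add: S_def m_def prob_space)
    finally show ?thesis unfolding X by (simp add: power2_eq_square)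
  qed
  define I where "I = (\<integral>x. (hp 0 x - hm 0 x)\<^sup>2 * (fA (hp 0 x) * fA (hm 0 x)) \<partial>M)"
  have I_eq: "I = 2 * a * S - 2 * m\<^sup>2"
  proof -
    have pt: "(u - w)\<^sup>2 * (fA u * fA w) = q2 u * fA w - 2 * (q1 u * q1 w) + fA u * q2 w" for u w
      by (simp add: q1_def q2_def fA_def indicator_def power2_eq_square algebra_simps)
    have j1: "integrable M (\<lambda>x. q2 (hp 0 x) * fA (hm 0 x))" by (rule int_uw[OF mq2 bq2 mfA bfA])
    have j2: "integrable M (\<lambda>x. q1 (hp 0 x) * q1 (hm 0 x))" by (rule int_uw[OF mq1 bq1 mq1 bq1])
    have j3: "integrable M (\<lambda>x. fA (hp 0 x) * q2 (hm 0 x))" by (rule int_uw[OF mfA bfA mq2 bq2])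
    have "I = (\<integral>x. q2 (hp 0 x) * fA (hm 0 x) - 2 * (q1 (hp 0 x) * q1 (hm 0 x)) + fA (hp 0 x) * q2 (hm 0 x) \<partial>M)"
      unfolding I_def pt ..
    also have "\<dots> = (\<integral>x. q2 (hp 0 x) * fA (hm 0 x) \<partial>M) - 2 * (\<integral>x. q1 (hp 0 x) * q1 (hm 0 x) \<partial>M)
        + (\<integral>x. fA (hp 0 x) * q2 (hm 0 x) \<partial>M)"
      using j1 j2 j3 by simp
    also have "\<dots> = S * a - 2 * (m * m) + a * S"
      unfolding S_def m_def a_def
      by (simp only: indep_prod[OF mq2 mfA bq2 bfA] indep_prod[OF mq1 mq1 bq1 bq1] indep_prod[OF mfA mq2 bfA bq2])
    finally show ?thesis by (simp add: power2_eq_square algebra_simps)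
  qed
  have jI: "integrable M (\<lambda>x. (hp 0 x - hm 0 x)\<^sup>2 * (fA (hp 0 x) * fA (hm 0 x)))"
  proof (rule bint[where B="4 * c\<^sup>2"])
    show "(\<lambda>x. (hp 0 x - hm 0 x)\<^sup>2 * (fA (hp 0 x) * fA (hm 0 x))) \<in> borel_measurable M" by measurable
    fix x
    have "(hp 0 x - hm 0 x)\<^sup>2 * (fA (hp 0 x) * fA (hm 0 x)) = q2 (hp 0 x) * fA (hm 0 x) - 2 * (q1 (hp 0 x) * q1 (hm 0 x)) + fA (hp 0 x) * q2 (hm 0 x)"
      by (simp add: q1_def q2_def fA_def indicator_def power2_eq_square algebra_simps)
    moreover have "\<bar>q2 (hp 0 x) * fA (hm 0 x)\<bar> \<le> c\<^sup>2 * 1" unfolding abs_mult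
      using bq2 bfA by (intro mult_mono) auto
    moreover have "\<bar>q1 (hp 0 x) * q1 (hm 0 x)\<bar> \<le> c * c" unfolding abs_mult
      using bq1 c0 by (intro mult_mono) auto
    moreover have "\<bar>fA (hp 0 x) * q2 (hm 0 x)\<bar> \<le> 1 * c\<^sup>2" unfolding abs_mult
      using bq2 bfA by (intro mult_mono) auto
    ultimately show "\<bar>(hp 0 x - hm 0 x)\<^sup>2 * (fA (hp 0 x) * fA (hm 0 x))\<bar> \<le> 4 * c\<^sup>2"
      by (simp add: power2_eq_square)
  qed
  have I_le: "I \<le> (\<integral>x. (hp 0 x - hm 0 x)\<^sup>2 * indicator {y. \<bar>hp 0 y - hm 0 y\<bar> \<le> 2*c} x \<partial>M)"
  proof -
    have eqR: "(\<lambda>x. (hp 0 x - hm 0 x)\<^sup>2 * indicator {y. \<bar>hp 0 y - hm 0 y\<bar> \<le> 2*c} x)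
       = (\<lambda>x. (hp 0 x - hm 0 x)\<^sup>2 * indicator {z. \<bar>z\<bar> \<le> 2*c} (hp 0 x - hm 0 x))"
      by (auto simp: indicator_def)
    have jR: "integrable M (\<lambda>x. (hp 0 x - hm 0 x)\<^sup>2 * indicator {z. \<bar>z\<bar> \<le> 2*c} (hp 0 x - hm 0 x))"
    proof (rule bint[where B="(2*c)\<^sup>2"])
      show "(\<lambda>x. (hp 0 x - hm 0 x)\<^sup>2 * indicator {z. \<bar>z\<bar> \<le> 2*c} (hp 0 x - hm 0 x)) \<in> borel_measurable M"
        by measurable
      fix x
      show "\<bar>(hp 0 x - hm 0 x)\<^sup>2 * indicator {z. \<bar>z\<bar> \<le> 2*c} (hp 0 x - hm 0 x)\<bar> \<le> (2*c)\<^sup>2"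
      proof (cases "\<bar>hp 0 x - hm 0 x\<bar> \<le> 2*c")
        case True
        then have "(hp 0 x - hm 0 x)\<^sup>2 \<le> (2*c)\<^sup>2" using power_mono[OF True abs_ge_zero, of 2] by simp
        then show ?thesis using True by (simp add: indicator_def)
      qed (simp add: indicator_def)
    qed
    show ?thesis unfolding I_def eqR
      by (rule integral_mono[OF jI jR]) (simp add: fA_def pw_upper)
  qed
  have I_ge: "SE4 * pB + pB * pE \<le> I"
  proof -
    have k1: "integrable M (\<lambda>x. qE (hp 0 x) * iB (hm 0 x))" by (rule int_uw[OF mqE bqE miB biB])
    have k2: "integrable M (\<lambda>x. iB (hp 0 x) * iE (hm 0 x))" by (rule int_uw[OF miB biB miE biE])
    have "SE4 * pB + pB * pE = (\<integral>x. qE (hp 0 x) * iB (hm 0 x) \<partial>M) + (\<integral>x. iB (hp 0 x) * iE (hm 0 x) \<partial>M)"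
      unfolding SE4_def pB_def pE_def
      by (simp only: indep_prod[OF mqE miB bqE biB] indep_prod[OF miB miE biB biE])
    also have "\<dots> = (\<integral>x. qE (hp 0 x) * iB (hm 0 x) + iB (hp 0 x) * iE (hm 0 x) \<partial>M)"
      using k1 k2 by simp
    also have "\<dots> \<le> I" unfolding I_def
      by (rule integral_mono[OF Bochner_Integration.integrable_add[OF k1 k2] jI])
         (unfold qE_def iB_def iE_def fA_def, rule pw_lower[OF K])
    finally show ?thesis .
  qed
  have S_le: "S \<le> (2*K+1)\<^sup>2 + 4 * SE4"
  proof -
    have iE2: "integrable M (\<lambda>x. qE (h 0 x))" by (rule int_h[OF mqE bqE])
    have iS: "integrable M (\<lambda>x. (2*K+1)\<^sup>2 + 4 * qE (h 0 x))"
      using iE2 by (intro Bochner_Integration.integrable_add integrable_mult_right) auto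
    have pt: "q2 y \<le> (2*K+1)\<^sup>2 + 4 * qE y" for y
    proof -
      have "4 * qE y = y\<^sup>2 * iE y" by (simp add: qE_def)
      then show ?thesis unfolding q2_def fA_def iE_def using pw_S[of y c K] by simp
    qed
    have "S \<le> (\<integral>x. (2*K+1)\<^sup>2 + 4 * qE (h 0 x) \<partial>M)" unfolding S_def
      by (rule integral_mono[OF int_h[OF mq2 bq2] iS pt])
    also have "\<dots> = (2*K+1)\<^sup>2 + 4 * SE4" using iE2 by (simp add: SE4_def prob_space)
    finally show ?thesis .
  qed
  have a_eq: "a = 1 - t"
  proof -
    have "a = prob {x\<in>space M. h 0 x \<in> {z. \<bar>z\<bar> \<le> c}}" unfolding a_def fA_def by (rule int_ind) auto
    also have "{x\<in>space M. h 0 x \<in> {z. \<bar>z\<bar> \<le> c}} = space M - {x\<in>space M. c < \<bar>h 0 x\<bar>}" by auto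
    also have "prob \<dots> = 1 - t" unfolding t_def tailp_def by (subst prob_compl) auto
    finally show ?thesis .
  qed
  have pB_eq: "pB = prob {x\<in>space M. \<bar>h 0 x\<bar> \<le> K}"
    unfolding pB_def iB_def by (subst int_ind) auto
  have pE_eq: "pE = prob {x\<in>space M. 2*K+1 < \<bar>h 0 x\<bar> \<and> \<bar>h 0 x\<bar> \<le> c}"
    unfolding pE_def iE_def by (subst int_ind) auto
  have t0: "0 \<le> t" unfolding t_def tailp_def by simp
  have SE0: "0 \<le> SE4" unfolding SE4_def qE_def iE_def by (intro Bochner_Integration.integral_nonneg) auto
  have pE0: "0 \<le> pE" unfolding pE_eq by simp
  have h1: "t * S \<le> t * ((2*K+1)\<^sup>2 + 4 * SE4)" by (rule mult_left_mono[OF S_le t0])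
  have h2: "t * (4 * SE4) \<le> (1/16) * (4 * SE4)" using t1 SE0 unfolding t_def by (intro mult_right_mono) auto
  have h3: "(1/2) * SE4 \<le> pB * SE4" using hB SE0 unfolding pB_eq by (intro mult_right_mono) auto
  have h4: "(1/2) * pE \<le> pB * pE" using hB pE0 unfolding pB_eq by (intro mult_right_mono) auto
  have h5: "t * (2*K+1)\<^sup>2 \<le> pE / 4" using t2 unfolding t_def pE_eq .
  have "S - m\<^sup>2 \<le> I"
  proof -
    have "I = 2 * S - 2 * (t * S) - 2 * m\<^sup>2" unfolding I_eq a_eq by (simp add: algebra_simps)
    moreover have "t * ((2*K+1)\<^sup>2 + 4 * SE4) = t * (2*K+1)\<^sup>2 + t * (4 * SE4)" by (simp add: algebra_simps)
    ultimately show ?thesis using h1 h2 h3 h4 h5 I_ge by (simp add: algebra_simps)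
  qed
  then show ?thesis using var_eq I_le by linarith
qed


lemma v_part:
  "\<forall>\<^sub>F N in sequentially. var_rv M (\<lambda>x. h 0 x * indicator {y. \<bar>h 0 y\<bar> \<le> real N} x)
     \<le> (\<integral>x. (hp 0 x - hm 0 x)\<^sup>2 * indicator {y. \<bar>hp 0 y - hm 0 y\<bar> \<le> 2 * real N} x \<partial>M)"
proof -
  obtain n0 where n0: "\<forall>r\<ge>real n0. tailp r \<le> 1/2" using tl_ev[of "1/2"] by auto
  obtain n1 where n1: "\<forall>r\<ge>real n1. tailp r \<le> 1/16" using tl_ev[of "1/16"] by auto
  define K where "K = real n0"
  have K0: "0 \<le> K" by (simp add: K_def)
  have hB: "1/2 \<le> prob {x\<in>space M. \<bar>h 0 x\<bar> \<le> K}"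
  proof -
    have "{x\<in>space M. \<bar>h 0 x\<bar> \<le> K} = space M - {x\<in>space M. K < \<bar>h 0 x\<bar>}" by auto
    then have "prob {x\<in>space M. \<bar>h 0 x\<bar> \<le> K} = 1 - tailp K"
      unfolding tailp_def by (simp add: prob_compl)
    then show ?thesis using n0 K_def by auto
  qed
  define E where "E n = {x\<in>space M. 2*K+1 < \<bar>h 0 x\<bar> \<and> \<bar>h 0 x\<bar> \<le> real n}" for n
  have Emono: "prob (E n) \<le> prob (E n')" if "n \<le> n'" for n n'
    unfolding E_def using that by (intro finite_measure_mono) auto
  have ev2: "\<forall>\<^sub>F N in sequentially. tailp (real N) * (2*K+1)\<^sup>2 \<le> prob (E N) / 4"
  proof (cases "\<exists>n2. 0 < prob (E n2)")
    case True
    then obtain n2 where e: "0 < prob (E n2)" by auto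
    have "0 < prob (E n2) / (4 * (2*K+1)\<^sup>2)" using e K0 by simp
    from tl_ev[OF this] obtain n3 where n3: "\<forall>r\<ge>real n3. tailp r \<le> prob (E n2) / (4 * (2*K+1)\<^sup>2)" by auto
    show ?thesis unfolding eventually_sequentially
    proof (intro exI allI impI)
      fix N assume N: "N \<ge> max n2 n3"
      then have "tailp (real N) \<le> prob (E n2) / (4 * (2*K+1)\<^sup>2)" using n3 by auto
      moreover have pos: "0 < 4 * (2*K+1)\<^sup>2" using K0 by simp
      ultimately have "tailp (real N) * (4 * (2*K+1)\<^sup>2) \<le> prob (E n2)"
        by (simp only: pos_le_divide_eq)
      then have "tailp (real N) * (2*K+1)\<^sup>2 \<le> prob (E n2) / 4" by simp
      also have "\<dots> \<le> prob (E N) / 4" using Emono[of n2 N] N by simp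
      finally show "tailp (real N) * (2*K+1)\<^sup>2 \<le> prob (E N) / 4" .
    qed
  next
    case False
    have z: "prob (E n) = 0" for n
    proof -
      have "\<not> 0 < prob (E n)" using False by auto
      then show ?thesis using measure_nonneg[of M "E n"] by linarith
    qed
    have "(\<lambda>n. prob (E n)) \<longlonglongrightarrow> prob (\<Union>n. E n)"
      unfolding E_def by (intro finite_Lim_measure_incseq) (auto simp: incseq_def)
    moreover have "(\<Union>n. E n) = {x\<in>space M. 2*K+1 < \<bar>h 0 x\<bar>}"
    proof safe
      fix x assume "x \<in> space M" "2*K+1 < \<bar>h 0 x\<bar>"
      moreover have "\<bar>h 0 x\<bar> \<le> real (nat \<lceil>\<bar>h 0 x\<bar>\<rceil>)" by (rule real_nat_ceiling_ge)
      ultimately have "x \<in> E (nat \<lceil>\<bar>h 0 x\<bar>\<rceil>)" unfolding E_def by simp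
      then show "x \<in> (\<Union>n. E n)" by blast
    qed (auto simp: E_def)
    ultimately have "(\<lambda>n. 0) \<longlonglongrightarrow> tailp (2*K+1)" unfolding tailp_def z by simp
    then have "tailp (2*K+1) = 0" by (simp add: LIMSEQ_const_iff)
    show ?thesis unfolding eventually_sequentially
    proof (intro exI allI impI)
      fix N assume N: "N \<ge> 2 * n0 + 1"
      then have "2*K+1 \<le> real N" unfolding K_def by simp
      then have "tailp (real N) \<le> 0" using tl_mono[of "2*K+1" "real N"] \<open>tailp (2*K+1) = 0\<close> by linarith
      moreover have "0 \<le> tailp (real N)" unfolding tailp_def by simp
      ultimately show "tailp (real N) * (2*K+1)\<^sup>2 \<le> prob (E N) / 4" by simp
    qed
  qed
  moreover have "\<forall>\<^sub>F N in sequentially. N \<ge> max n0 n1" by (rule eventually_ge_at_top)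
  ultimately show ?thesis
  proof eventually_elim
    case (elim N)
    show ?case
    proof (rule core)
      show "0 \<le> K" by (rule K0)
      show "K \<le> real N" using elim K_def by simp
      show "1/2 \<le> prob {x\<in>space M. \<bar>h 0 x\<bar> \<le> K}" by (rule hB)
      show "tailp (real N) \<le> 1/16" using n1 elim by simp
      show "tailp (real N) * (2*K+1)\<^sup>2 \<le> prob {x\<in>space M. 2*K+1 < \<bar>h 0 x\<bar> \<and> \<bar>h 0 x\<bar> \<le> real N} / 4"
        using elim unfolding E_def by simp
    qed
  qed
qed

end

theorem lemma8p4:
  fixes M :: "'a measure"
    and h hp hm :: "nat \<Rightarrow> 'a \<Rightarrow> real"
  assumes "prob_space M"
    and "prob_space.indep_vars M (\<lambda>_. borel) h UNIV"
    and "\<And>n. distr M borel (h n) = distr M borel (h 0)"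
    and "prob_space.indep_vars M (\<lambda>_. borel)
           (\<lambda>(b, n). if b then hp n else hm n) (UNIV :: (bool \<times> nat) set)"
    and "\<And>n. distr M borel (hp n) = distr M borel (h 0)"
    and "\<And>n. distr M borel (hm n) = distr M borel (h 0)"
  shows "\<forall>\<^sub>F N in sequentially.
    (let hs = (\<lambda>n x. hp n x - hm n x) in
       v_trunc M h N 1 \<le> 2 * v_trunc M hs (2 * N) 1
     \<and> v_trunc M hs (2 * N) 1 = sigma_trunc M hs (2 * N) 1
     \<and> tau_tail M h N 1 \<le> 4 * tau_tail M hs N (1 / 2)
     \<and> pi_dev M h N 1 \<ge> 1 / 2 * pi_dev M hs N 2)"
proof -
  have "L8 M h hp hm" using assms by (simp add: L8_def L8_axioms_def)
  then interpret L8 M h hp hm .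
  have ev0: "\<forall>\<^sub>F N in sequentially. (N::nat) > 0" by (rule eventually_gt_at_top)
  from ev0 v_part tau_part show ?thesis
  proof eventually_elim
    case (elim N)
    then have N: "N > 0" and v: "var_rv M (\<lambda>x. h 0 x * indicator {y. \<bar>h 0 y\<bar> \<le> real N} x)
     \<le> (\<integral>x. (hp 0 x - hm 0 x)\<^sup>2 * indicator {y. \<bar>hp 0 y - hm 0 y\<bar> \<le> 2 * real N} x \<partial>M)"
      and tau: "tailp (real N) \<le> 4 * prob {x\<in>space M. 1/2 * real N < \<bar>hp 0 x - hm 0 x\<bar>}" by auto
    define R where "R = (\<integral>x. (hp 0 x - hm 0 x)\<^sup>2 * indicator {y. \<bar>hp 0 y - hm 0 y\<bar> \<le> 2 * real N} x \<partial>M)"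
    have vs: "v_trunc M (\<lambda>n x. hp n x - hm n x) (2 * N) 1 = R / (2 * real N)"
      unfolding v_trunc_def var_sym R_def by simp
    have ss: "sigma_trunc M (\<lambda>n x. hp n x - hm n x) (2 * N) 1 = R / (2 * real N)"
      unfolding sigma_trunc_def R_def by simp
    have vh: "v_trunc M h N 1 = var_rv M (\<lambda>x. h 0 x * indicator {y. \<bar>h 0 y\<bar> \<le> real N} x) / real N"
      unfolding v_trunc_def by simp
    have c1: "v_trunc M h N 1 \<le> 2 * v_trunc M (\<lambda>n x. hp n x - hm n x) (2 * N) 1"
      unfolding vh vs using v N unfolding R_def[symmetric] by (simp add: divide_right_mono)
    have c3: "tau_tail M h N 1 \<le> 4 * tau_tail M (\<lambda>n x. hp n x - hm n x) N (1 / 2)"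
      unfolding tau_tail_def using mult_left_mono[OF tau, of "real N"] unfolding tailp_def
      by (simp add: algebra_simps)
    have d0: "d_trunc M (\<lambda>n x. hp n x - hm n x) N = 0"
      unfolding d_trunc_def using sym0 by simp
    have c4: "1 / 2 * pi_dev M (\<lambda>n x. hp n x - hm n x) N 2 \<le> pi_dev M h N 1"
      using pi_part[OF N, of "d_trunc M h N"] unfolding pi_dev_def d0 by simp
    show ?case using c1 vs ss c3 c4 by (simp add: Let_def)
  qed
qed

end
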